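(* Let $(H,B_1,B_2)$ be a Rota-Baxter system of Hopf algebras with descendent operation $\circ$ and cocycle $\sigma$, and let $H_1=\operatorname{Im}(\sigma)$. Then (1) $H_1\circ H_1\subseteq H_1$ and $\Delta(H_1)\subseteq H_1\otimes H_1$; (2) denoting by $\circ_1,\Delta_1,\epsilon_1$ the restrictions of $\circ,\Delta,\epsilon$ to $H_1$, $(H_1,\circ_1,1)$ is a unital algebra and $(H_1,\Delta_1,\epsilon_1)$ is a cocommutative coalgebra.
   Context: $\mathbb{F}$ is a field of characteristic $0$; Sweedler notation $\Delta(a)=a_1\otimes a_2$. A Rota-Baxter system of Hopf algebras is a triple $(H,B_1,B_2)$ where $(H,\cdot,1,\Delta,\epsilon,S)$ is a cocommutative Hopf algebra and $B_1,B_2:H\to H$ are coalgebra homomorphisms with $B_1(1)=B_2(1)=1$ such that for all $a,b\in H$: $B_1(a)B_1(b)=B_1(B_1(a_1)bS(B_2(a_2)))$ and $B_2(a)B_2(b)=B_2(B_1(a_1)bS(B_2(a_2)))$. Its descendent operation is $a\circ b=B_1(a_1)bS(B_2(a_2))$ and cocycle $\sigma(a)=B_1(a_1)S(B_2(a_2))$. *)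

theory Defs
  imports Main "HOL.Vector_Spaces"
begin

text \<open>
  Elements of tensor powers of H are
  represented by finite lists of pure tensors; two such lists denote the same
  tensor iff they agree under all multilinear forms (over a field the canonical map
  from the tensor power to the dual of the space of multilinear forms is injective,
  so this is exactly equality in the tensor power). The coproduct is a map
  delta sending a to a list representing Delta(a); Sweedler sums a_1 (x) a_2 fed into
  a bilinear map f are computed as tsum f (delta a).
\<close>

definition bilin_form :: "('k::field \<Rightarrow> 'h::ab_group_add \<Rightarrow> 'h) \<Rightarrow> ('h \<Rightarrow> 'h \<Rightarrow> 'k) \<Rightarrow> bool" where
  "bilin_form sc \<phi> \<longleftrightarrow>
     (\<forall>x y z. \<phi> (x + y) z = \<phi> x z + \<phi> y z) \<and> (\<forall>c x z. \<phi> (sc c x) z = c * \<phi> x z) \<and>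
     (\<forall>x y z. \<phi> z (x + y) = \<phi> z x + \<phi> z y) \<and> (\<forall>c x z. \<phi> z (sc c x) = c * \<phi> z x)"

definition trilin_form :: "('k::field \<Rightarrow> 'h::ab_group_add \<Rightarrow> 'h) \<Rightarrow> ('h \<Rightarrow> 'h \<Rightarrow> 'h \<Rightarrow> 'k) \<Rightarrow> bool" where
  "trilin_form sc \<psi> \<longleftrightarrow>
     (\<forall>u. bilin_form sc (\<lambda>x y. \<psi> x y u) \<and> bilin_form sc (\<lambda>x y. \<psi> x u y)
          \<and> bilin_form sc (\<lambda>x y. \<psi> u x y))"

definition tsum :: "('h \<Rightarrow> 'h \<Rightarrow> 'b::comm_monoid_add) \<Rightarrow> ('h \<times> 'h) list \<Rightarrow> 'b" where
  "tsum f L = (\<Sum>(x, y)\<leftarrow>L. f x y)"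

definition tsum3 :: "('h \<Rightarrow> 'h \<Rightarrow> 'h \<Rightarrow> 'b::comm_monoid_add) \<Rightarrow> ('h \<times> 'h \<times> 'h) list \<Rightarrow> 'b" where
  "tsum3 f L = (\<Sum>(x, y, z)\<leftarrow>L. f x y z)"

definition teq :: "('k::field \<Rightarrow> 'h::ab_group_add \<Rightarrow> 'h) \<Rightarrow> ('h \<times> 'h) list \<Rightarrow> ('h \<times> 'h) list \<Rightarrow> bool" where
  "teq sc L M \<longleftrightarrow> (\<forall>\<phi>. bilin_form sc \<phi> \<longrightarrow> tsum \<phi> L = tsum \<phi> M)"

definition teq3 :: "('k::field \<Rightarrow> 'h::ab_group_add \<Rightarrow> 'h) \<Rightarrow> ('h \<times> 'h \<times> 'h) list \<Rightarrow> ('h \<times> 'h \<times> 'h) list \<Rightarrow> bool" where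
  "teq3 sc L M \<longleftrightarrow> (\<forall>\<psi>. trilin_form sc \<psi> \<longrightarrow> tsum3 \<psi> L = tsum3 \<psi> M)"

definition lin_on :: "('k::field \<Rightarrow> 'h::ab_group_add \<Rightarrow> 'h) \<Rightarrow> 'h set \<Rightarrow> ('h \<Rightarrow> 'h) \<Rightarrow> bool" where
  "lin_on sc W f \<longleftrightarrow> (\<forall>x\<in>W. \<forall>y\<in>W. f (x + y) = f x + f y) \<and> (\<forall>c. \<forall>x\<in>W. f (sc c x) = sc c (f x))"

definition flin_on :: "('k::field \<Rightarrow> 'h::ab_group_add \<Rightarrow> 'h) \<Rightarrow> 'h set \<Rightarrow> ('h \<Rightarrow> 'k) \<Rightarrow> bool" where
  "flin_on sc W f \<longleftrightarrow> (\<forall>x\<in>W. \<forall>y\<in>W. f (x + y) = f x + f y) \<and> (\<forall>c. \<forall>x\<in>W. f (sc c x) = c * f x)"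

definition algebra_over :: "('k::field \<Rightarrow> 'h::ring_1 \<Rightarrow> 'h) \<Rightarrow> bool" where
  "algebra_over sc \<longleftrightarrow> vector_space sc \<and>
     (\<forall>c x y. sc c (x * y) = sc c x * y \<and> sc c (x * y) = x * sc c y)"

definition unital_algebra_on ::
  "('k::field \<Rightarrow> 'h::ab_group_add \<Rightarrow> 'h) \<Rightarrow> 'h set \<Rightarrow> ('h \<Rightarrow> 'h \<Rightarrow> 'h) \<Rightarrow> 'h \<Rightarrow> bool" where
  "unital_algebra_on sc W m u \<longleftrightarrow>
     module.subspace sc W \<and> u \<in> W \<and> (\<forall>a\<in>W. \<forall>b\<in>W. m a b \<in> W) \<and>
     (\<forall>b\<in>W. lin_on sc W (\<lambda>a. m a b)) \<and> (\<forall>a\<in>W. lin_on sc W (\<lambda>b. m a b)) \<and>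
     (\<forall>a\<in>W. \<forall>b\<in>W. \<forall>c\<in>W. m (m a b) c = m a (m b c)) \<and>
     (\<forall>a\<in>W. m u a = a \<and> m a u = a)"

definition coalgebra_on ::
  "('k::field \<Rightarrow> 'h::ab_group_add \<Rightarrow> 'h) \<Rightarrow> 'h set \<Rightarrow> ('h \<Rightarrow> ('h \<times> 'h) list) \<Rightarrow> ('h \<Rightarrow> 'k) \<Rightarrow> bool" where
  "coalgebra_on sc W delta eps \<longleftrightarrow>
     module.subspace sc W \<and>
     (\<forall>a\<in>W. \<exists>L. set L \<subseteq> W \<times> W \<and> teq sc (delta a) L) \<and>
     (\<forall>a\<in>W. \<forall>b\<in>W. teq sc (delta (a + b)) (delta a @ delta b)) \<and>
     (\<forall>c. \<forall>a\<in>W. teq sc (delta (sc c a)) (map (\<lambda>(x, y). (sc c x, y)) (delta a))) \<and>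
     flin_on sc W eps \<and>
     (\<forall>a\<in>W. teq3 sc
        (concat (map (\<lambda>(x, y). map (\<lambda>(x1, x2). (x1, x2, y)) (delta x)) (delta a)))
        (concat (map (\<lambda>(x, y). map (\<lambda>(y1, y2). (x, y1, y2)) (delta y)) (delta a)))) \<and>
     (\<forall>a\<in>W. tsum (\<lambda>x y. sc (eps x) y) (delta a) = a \<and> tsum (\<lambda>x y. sc (eps y) x) (delta a) = a)"

definition cocommutative_on ::
  "('k::field \<Rightarrow> 'h::ab_group_add \<Rightarrow> 'h) \<Rightarrow> 'h set \<Rightarrow> ('h \<Rightarrow> ('h \<times> 'h) list) \<Rightarrow> bool" where
  "cocommutative_on sc W delta \<longleftrightarrow> (\<forall>a\<in>W. teq sc (delta a) (map (\<lambda>(x, y). (y, x)) (delta a)))"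

definition cocomm_hopf_algebra ::
  "('k::field \<Rightarrow> 'h::ring_1 \<Rightarrow> 'h) \<Rightarrow> ('h \<Rightarrow> ('h \<times> 'h) list) \<Rightarrow> ('h \<Rightarrow> 'k) \<Rightarrow> ('h \<Rightarrow> 'h) \<Rightarrow> bool" where
  "cocomm_hopf_algebra sc delta eps S \<longleftrightarrow>
     algebra_over sc \<and> coalgebra_on sc UNIV delta eps \<and> cocommutative_on sc UNIV delta \<and>
     (\<forall>a b. teq sc (delta (a * b))
        (concat (map (\<lambda>(x, y). map (\<lambda>(u, v). (x * u, y * v)) (delta b)) (delta a)))) \<and>
     teq sc (delta 1) [(1, 1)] \<and>
     (\<forall>a b. eps (a * b) = eps a * eps b) \<and> eps 1 = 1 \<and>
     lin_on sc UNIV S \<and>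
     (\<forall>a. tsum (\<lambda>x y. S x * y) (delta a) = sc (eps a) 1 \<and>
          tsum (\<lambda>x y. x * S y) (delta a) = sc (eps a) 1)"

definition coalg_hom ::
  "('k::field \<Rightarrow> 'h::ab_group_add \<Rightarrow> 'h) \<Rightarrow> ('h \<Rightarrow> ('h \<times> 'h) list) \<Rightarrow> ('h \<Rightarrow> 'k) \<Rightarrow> ('h \<Rightarrow> 'h) \<Rightarrow> bool" where
  "coalg_hom sc delta eps B \<longleftrightarrow>
     lin_on sc UNIV B \<and>
     (\<forall>a. teq sc (delta (B a)) (map (\<lambda>(x, y). (B x, B y)) (delta a))) \<and>
     (\<forall>a. eps (B a) = eps a)"

definition desc_op :: "('h \<Rightarrow> ('h \<times> 'h) list) \<Rightarrow> ('h::ring_1 \<Rightarrow> 'h) \<Rightarrow> ('h \<Rightarrow> 'h) \<Rightarrow> ('h \<Rightarrow> 'h) \<Rightarrow> 'h \<Rightarrow> 'h \<Rightarrow> 'h" where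
  "desc_op delta S B1 B2 a b = tsum (\<lambda>x y. B1 x * b * S (B2 y)) (delta a)"

definition cocycle :: "('h \<Rightarrow> ('h \<times> 'h) list) \<Rightarrow> ('h::ring_1 \<Rightarrow> 'h) \<Rightarrow> ('h \<Rightarrow> 'h) \<Rightarrow> ('h \<Rightarrow> 'h) \<Rightarrow> 'h \<Rightarrow> 'h" where
  "cocycle delta S B1 B2 a = tsum (\<lambda>x y. B1 x * S (B2 y)) (delta a)"

definition rota_baxter_system ::
  "('k::field \<Rightarrow> 'h::ring_1 \<Rightarrow> 'h) \<Rightarrow> ('h \<Rightarrow> ('h \<times> 'h) list) \<Rightarrow> ('h \<Rightarrow> 'k) \<Rightarrow> ('h \<Rightarrow> 'h)
    \<Rightarrow> ('h \<Rightarrow> 'h) \<Rightarrow> ('h \<Rightarrow> 'h) \<Rightarrow> bool" where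
  "rota_baxter_system sc delta eps S B1 B2 \<longleftrightarrow>
     cocomm_hopf_algebra sc delta eps S \<and>
     coalg_hom sc delta eps B1 \<and> coalg_hom sc delta eps B2 \<and> B1 1 = 1 \<and> B2 1 = 1 \<and>
     (\<forall>a b. B1 a * B1 b = B1 (desc_op delta S B1 B2 a b)) \<and>
     (\<forall>a b. B2 a * B2 b = B2 (desc_op delta S B1 B2 a b))"

end

theory Submission
  imports Defs
begin

lemma tsum_Nil[simp]: "tsum f [] = 0" by (simp add: tsum_def)
lemma tsum_Cons[simp]: "tsum f ((x,y)#L) = f x y + tsum f L" by (simp add: tsum_def)
lemma tsum_append[simp]: "tsum f (L @ M) = tsum f L + tsum f M" by (simp add: tsum_def)
lemma tsum_map2[simp]: "tsum f (map (\<lambda>(x, y). (A x, B y)) L) = tsum (\<lambda>x y. f (A x) (B y)) L"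
  by (induct L) auto
lemma tsum_swap_map[simp]: "tsum f (map (\<lambda>(x, y). (y, x)) L) = tsum (\<lambda>x y. f y x) L"
  by (induct L) auto
lemma tsum_concat: "tsum f (concat (map G L)) = tsum (\<lambda>x y. tsum f (G (x,y))) L"
  by (induct L) auto
lemma tsum_hom:
  assumes "\<And>a b. g (a + b) = g a + g b" "g 0 = 0"
  shows "tsum (\<lambda>x y. g (f x y)) L = g (tsum f L)"
  by (induct L) (auto simp: assms)
lemma tsum_add: "tsum (\<lambda>x y. f x y + g x y) L = tsum f L + tsum g L"
  by (induct L) (auto simp: algebra_simps)
lemma tsum_comm: "tsum (\<lambda>x y. tsum (g x y) M) L = tsum (\<lambda>u v. tsum (\<lambda>x y. g x y u v) L) M"
proof (induct L)
  case Nil then show ?case by (induct M) auto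
next
  case (Cons p L) then show ?case by (cases p) (simp add: tsum_add)
qed
lemma tsum_cong: "(\<And>x y. (x,y) \<in> set L \<Longrightarrow> f x y = g x y) \<Longrightarrow> tsum f L = tsum g L"
  by (induct L) auto

lemma tsum3_Nil[simp]: "tsum3 f [] = 0" by (simp add: tsum3_def)
lemma tsum3_Cons[simp]: "tsum3 f ((x,y,z)#L) = f x y z + tsum3 f L" by (simp add: tsum3_def)
lemma tsum3_append[simp]: "tsum3 f (L @ M) = tsum3 f L + tsum3 f M" by (simp add: tsum3_def)
lemma tsum3_concat: "tsum3 f (concat (map G L)) = tsum (\<lambda>x y. tsum3 f (G (x,y))) L"
  by (induct L) auto
lemma tsum3_mapL[simp]: "tsum3 f (map (\<lambda>(x1, x2). (x1, x2, y)) L) = tsum (\<lambda>x1 x2. f x1 x2 y) L"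
  by (induct L) auto
lemma tsum3_mapR[simp]: "tsum3 f (map (\<lambda>(y1, y2). (x, y1, y2)) L) = tsum (\<lambda>y1 y2. f x y1 y2) L"
  by (induct L) auto
lemma tsum3_Pair[simp]: "tsum3 f (map (Pair x) L) = tsum (f x) L"
  by (induct L) auto
lemma tsum3_hom:
  assumes "\<And>a b. g (a + b) = g a + g b" "g 0 = 0"
  shows "tsum3 (\<lambda>x y z. g (f x y z)) L = g (tsum3 f L)"
  by (induct L) (auto simp: assms)

lemma vs_self: "vector_space ((*) :: 'k::field \<Rightarrow> 'k \<Rightarrow> 'k)"
  by unfold_locales (auto simp: algebra_simps)

lemma separate:
  assumes vs: "vector_space (sc :: 'k::field \<Rightarrow> 'h::ab_group_add \<Rightarrow> 'h)" and v: "v \<noteq> 0"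
  shows "\<exists>g. (\<forall>x y. g (x + y) = g x + g y) \<and> (\<forall>c x. g (sc c x) = c * g x) \<and> g v = 1"
proof -
  interpret vp: vector_space_pair sc "(*) :: 'k \<Rightarrow> 'k \<Rightarrow> 'k"
    using vs vs_self by (simp add: vector_space_pair_def)
  have "vp.vs1.independent {v}" using v by simp
  from vp.linear_independent_extend[OF this, of "\<lambda>_. 1"]
  obtain g where g: "Vector_Spaces.linear sc (*) g" "g v = 1" by auto
  then show ?thesis
    by (intro exI[of _ g]) (auto simp: Vector_Spaces.linear_iff)
qed



locale RBS =
  fixes sc :: "'k::field \<Rightarrow> 'h::ring_1 \<Rightarrow> 'h" and delta :: "'h \<Rightarrow> ('h \<times> 'h) list"
    and eps :: "'h \<Rightarrow> 'k" and S B1 B2 :: "'h \<Rightarrow> 'h"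
  assumes rbs: "rota_baxter_system sc delta eps S B1 B2"
begin

lemma hopf: "cocomm_hopf_algebra sc delta eps S" using rbs by (simp add: rota_baxter_system_def)
lemma alg: "algebra_over sc" using hopf by (simp add: cocomm_hopf_algebra_def)
lemma vs: "vector_space sc" using alg by (simp add: algebra_over_def)
lemma coalg: "coalgebra_on sc UNIV delta eps" using hopf by (simp add: cocomm_hopf_algebra_def)

interpretation V: vector_space sc by (rule vs)

lemma sc_multL: "sc c (x * y) = sc c x * y" using alg by (simp add: algebra_over_def)
lemma sc_multR: "sc c (x * y) = x * sc c y" using alg unfolding algebra_over_def by blast

definition lin :: "('h \<Rightarrow> 'h) \<Rightarrow> bool" where
  "lin f \<longleftrightarrow> (\<forall>x y. f (x + y) = f x + f y) \<and> (\<forall>c x. f (sc c x) = sc c (f x))"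
definition bil :: "('h \<Rightarrow> 'h \<Rightarrow> 'h) \<Rightarrow> bool" where
  "bil f \<longleftrightarrow> (\<forall>y. lin (\<lambda>x. f x y)) \<and> (\<forall>x. lin (f x))"
definition tri :: "('h \<Rightarrow> 'h \<Rightarrow> 'h \<Rightarrow> 'h) \<Rightarrow> bool" where
  "tri f \<longleftrightarrow> (\<forall>y z. lin (\<lambda>x. f x y z)) \<and> (\<forall>x z. lin (\<lambda>y. f x y z)) \<and> (\<forall>x y. lin (f x y))"

abbreviation sw :: "('h \<Rightarrow> 'h \<Rightarrow> 'h) \<Rightarrow> 'h \<Rightarrow> 'h" where "sw f a \<equiv> tsum f (delta a)"

lemma linD: "lin f \<Longrightarrow> f (x + y) = f x + f y" "lin f \<Longrightarrow> f (sc c x) = sc c (f x)"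
  by (auto simp: lin_def)
lemma lin0: "lin f \<Longrightarrow> f 0 = 0"
  using linD(2)[of f 0 0] by simp
lemma linI: "(\<And>x y. f (x + y) = f x + f y) \<Longrightarrow> (\<And>c x. f (sc c x) = sc c (f x)) \<Longrightarrow> lin f"
  by (auto simp: lin_def)
lemma bilI: "(\<And>y. lin (\<lambda>x. f x y)) \<Longrightarrow> (\<And>x. lin (\<lambda>y. f x y)) \<Longrightarrow> bil f"
  by (auto simp: bil_def)
lemma bilD: "bil f \<Longrightarrow> lin (\<lambda>x. f x y)" "bil f \<Longrightarrow> lin (\<lambda>y. f x y)"
  by (auto simp: bil_def)
lemma triI: "(\<And>y z. lin (\<lambda>x. f x y z)) \<Longrightarrow> (\<And>x z. lin (\<lambda>y. f x y z)) \<Longrightarrow> (\<And>x y. lin (\<lambda>z. f x y z)) \<Longrightarrow> tri f"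
  by (auto simp: tri_def)

lemma tsum_lin_out: "lin g \<Longrightarrow> tsum (\<lambda>x y. g (f x y)) L = g (tsum f L)"
  by (rule tsum_hom) (auto simp: linD lin0)

lemma tsum_sc_out: "tsum (\<lambda>x y. sc c (f x y)) L = sc c (tsum f L)"
  by (rule tsum_hom) (auto simp: V.scale_right_distrib)

lemma lin_id: "lin (\<lambda>x. x)" by (rule linI) auto
lemma lin_add: "lin f \<Longrightarrow> lin g \<Longrightarrow> lin (\<lambda>x. f x + g x)"
  by (rule linI) (auto simp: linD V.scale_right_distrib)
lemma lin_mulL: "lin f \<Longrightarrow> lin (\<lambda>x. f x * c)"
  by (rule linI) (auto simp: linD distrib_right sc_multL)
lemma lin_mulR: "lin f \<Longrightarrow> lin (\<lambda>x. c * f x)"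
  by (rule linI) (auto simp: linD distrib_left sc_multR)
lemma lin_scL: "lin f \<Longrightarrow> lin (\<lambda>x. sc c (f x))"
  by (rule linI) (auto simp: linD V.scale_right_distrib mult.commute)
lemma lin_tsum: "(\<And>u v. lin (\<lambda>x. F x u v)) \<Longrightarrow> lin (\<lambda>x. tsum (F x) L)"
proof (induct L)
  case Nil then show ?case by (intro linI) auto
next
  case (Cons p L)
  then show ?case
    by (cases p) (auto simp: tsum_Cons intro!: lin_add)
qed

lemma g_diff: "(\<And>x y. g (x + y) = g x + g y) \<Longrightarrow> g (a - b) = g a - g b" for g :: "'h \<Rightarrow> 'k"
  by (metis add_diff_cancel diff_add_cancel eq_diff_eq)

lemma transfer:
  assumes "teq sc L M" "bil f" shows "tsum f L = tsum f M"
proof (rule ccontr)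
  assume ne: "tsum f L \<noteq> tsum f M"
  obtain g where g: "\<And>x y. g (x + y) = g x + g y" "\<And>c x. g (sc c x) = c * g x"
     "g (tsum f L - tsum f M) = 1"
    using separate[OF vs, of "tsum f L - tsum f M"] ne by auto
  have g0: "g 0 = 0" using g(2)[of 0 0] by simp
  have "bilin_form sc (\<lambda>x y. g (f x y))"
    using assms(2) unfolding bilin_form_def bil_def lin_def by (auto simp: g)
  then have "tsum (\<lambda>x y. g (f x y)) L = tsum (\<lambda>x y. g (f x y)) M"
    using assms(1) by (simp add: teq_def)
  then have "g (tsum f L) = g (tsum f M)" by (simp add: tsum_hom g g0)
  then show False using g(3) g_diff[of g, OF g(1)] by simp
qed

lemma transfer3:
  assumes "teq3 sc L M" "tri f" shows "tsum3 f L = tsum3 f M"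
proof (rule ccontr)
  assume ne: "tsum3 f L \<noteq> tsum3 f M"
  obtain g where g: "\<And>x y. g (x + y) = g x + g y" "\<And>c x. g (sc c x) = c * g x"
     "g (tsum3 f L - tsum3 f M) = 1"
    using separate[OF vs, of "tsum3 f L - tsum3 f M"] ne by auto
  have g0: "g 0 = 0" using g(2)[of 0 0] by simp
  have "trilin_form sc (\<lambda>x y z. g (f x y z))"
    using assms(2) unfolding trilin_form_def bilin_form_def tri_def lin_def by (auto simp: g)
  then have "tsum3 (\<lambda>x y z. g (f x y z)) L = tsum3 (\<lambda>x y z. g (f x y z)) M"
    using assms(1) by (simp add: teq3_def)
  then have "g (tsum3 f L) = g (tsum3 f M)" by (simp add: tsum3_hom g g0)
  then show False using g(3) g_diff[of g, OF g(1)] by simp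
qed

lemma teqI:
  assumes h: "\<And>f. bil f \<Longrightarrow> tsum f L = tsum f M" shows "teq sc L M"
  unfolding teq_def
proof (intro allI impI)
  fix \<phi> assume phi: "bilin_form sc \<phi>"
  have phi0: "\<phi> 0 z = 0" for z
    using phi unfolding bilin_form_def by (metis V.scale_zero_left mult_zero_left)
  show "tsum \<phi> L = tsum \<phi> M"
  proof (cases "(1::'h) = 0")
    case True
    then have all0: "x = 0" for x :: 'h by (metis mult_1_right mult_zero_right)
    have "tsum \<phi> K = 0" for K
      by (induct K) (auto simp: phi0 all0[of "fst _"] cong del: if_weak_cong, metis all0 phi0)
    then show ?thesis by simp
  next
    case False
    define f where "f x y = sc (\<phi> x y) 1" for x y
    have "bil f" unfolding f_def
      by (intro bilI linI) (use phi in \<open>auto simp: bilin_form_def V.scale_left_distrib\<close>)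
    have fK: "tsum f K = sc (tsum \<phi> K) 1" for K
      unfolding f_def by (rule tsum_hom[where g = "\<lambda>t. sc t 1" and f = \<phi>]) (auto simp: V.scale_left_distrib)
    from h[OF \<open>bil f\<close>] have "sc (tsum \<phi> L) 1 = sc (tsum \<phi> M) 1" by (simp add: fK)
    then have "sc (tsum \<phi> L - tsum \<phi> M) 1 = 0" by (simp add: V.scale_left_diff_distrib)
    then show ?thesis using False by simp
  qed
qed

lemma d_add: "teq sc (delta (a + b)) (delta a @ delta b)" using coalg by (simp add: coalgebra_on_def)
lemma d_sc: "teq sc (delta (sc c a)) (map (\<lambda>(x, y). (sc c x, y)) (delta a))"
  using coalg by (simp add: coalgebra_on_def)
lemma eps_add: "eps (a + b) = eps a + eps b" using coalg by (simp add: coalgebra_on_def flin_on_def)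
lemma eps_sc: "eps (sc c a) = c * eps a" using coalg by (simp add: coalgebra_on_def flin_on_def)
lemma d_coassoc: "teq3 sc
        (concat (map (\<lambda>(x, y). map (\<lambda>(x1, x2). (x1, x2, y)) (delta x)) (delta a)))
        (concat (map (\<lambda>(x, y). map (\<lambda>(y1, y2). (x, y1, y2)) (delta y)) (delta a)))"
  using coalg by (simp add: coalgebra_on_def)
lemma counit: "tsum (\<lambda>x y. sc (eps x) y) (delta a) = a" "tsum (\<lambda>x y. sc (eps y) x) (delta a) = a"
  using coalg by (simp_all add: coalgebra_on_def)
lemma d_cocomm: "teq sc (delta a) (map (\<lambda>(x, y). (y, x)) (delta a))"
  using hopf by (simp add: cocomm_hopf_algebra_def cocommutative_on_def)
lemma d_mult: "teq sc (delta (a * b))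
        (concat (map (\<lambda>(x, y). map (\<lambda>(u, v). (x * u, y * v)) (delta b)) (delta a)))"
  using hopf by (simp add: cocomm_hopf_algebra_def)
lemma d_one: "teq sc (delta 1) [(1, 1)]" using hopf by (simp add: cocomm_hopf_algebra_def)
lemma eps_mult: "eps (a * b) = eps a * eps b" using hopf by (simp add: cocomm_hopf_algebra_def)
lemma eps_one: "eps 1 = 1" using hopf by (simp add: cocomm_hopf_algebra_def)
lemma lin_S0: "lin S" using hopf by (simp add: cocomm_hopf_algebra_def lin_on_def lin_def)
lemma antipode: "tsum (\<lambda>x y. S x * y) (delta a) = sc (eps a) 1"
   "tsum (\<lambda>x y. x * S y) (delta a) = sc (eps a) 1"
  using hopf by (simp_all add: cocomm_hopf_algebra_def)
lemma chB1: "coalg_hom sc delta eps B1" using rbs by (simp add: rota_baxter_system_def)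
lemma chB2: "coalg_hom sc delta eps B2" using rbs by (simp add: rota_baxter_system_def)
lemma lin_B10: "lin B1" using chB1 by (simp add: coalg_hom_def lin_on_def lin_def)
lemma lin_B20: "lin B2" using chB2 by (simp add: coalg_hom_def lin_on_def lin_def)
lemma d_B1: "teq sc (delta (B1 a)) (map (\<lambda>(x, y). (B1 x, B1 y)) (delta a))"
  using chB1 by (simp add: coalg_hom_def)
lemma d_B2: "teq sc (delta (B2 a)) (map (\<lambda>(x, y). (B2 x, B2 y)) (delta a))"
  using chB2 by (simp add: coalg_hom_def)
lemma B1_one: "B1 1 = 1" and B2_one: "B2 1 = 1" using rbs by (simp_all add: rota_baxter_system_def)
lemma RB1: "B1 a * B1 b = B1 (desc_op delta S B1 B2 a b)"
  and RB2: "B2 a * B2 b = B2 (desc_op delta S B1 B2 a b)"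
  using rbs by (simp_all add: rota_baxter_system_def)

lemma lin_S: "lin f \<Longrightarrow> lin (\<lambda>x. S (f x))" using lin_S0 by (intro linI) (auto simp: linD)
lemma lin_B1: "lin f \<Longrightarrow> lin (\<lambda>x. B1 (f x))" using lin_B10 by (intro linI) (auto simp: linD)
lemma lin_B2: "lin f \<Longrightarrow> lin (\<lambda>x. B2 (f x))" using lin_B20 by (intro linI) (auto simp: linD)
lemma lin_eps: "lin f \<Longrightarrow> lin (\<lambda>x. sc (eps (f x)) c)"
  by (intro linI) (auto simp: linD eps_add eps_sc V.scale_left_distrib)
lemma lin_bilL: "bil f \<Longrightarrow> lin g \<Longrightarrow> lin (\<lambda>x. f (g x) c)"
  unfolding bil_def lin_def by auto
lemma lin_bilR: "bil f \<Longrightarrow> lin g \<Longrightarrow> lin (\<lambda>x. f c (g x))"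
  unfolding bil_def lin_def by auto
lemma lin_triL: "tri f \<Longrightarrow> lin g \<Longrightarrow> lin (\<lambda>x. f (g x) c d)"
  unfolding tri_def lin_def by auto
lemma lin_triM: "tri f \<Longrightarrow> lin g \<Longrightarrow> lin (\<lambda>x. f c (g x) d)"
  unfolding tri_def lin_def by auto
lemma lin_triR: "tri f \<Longrightarrow> lin g \<Longrightarrow> lin (\<lambda>x. f c d (g x))"
  unfolding tri_def lin_def by auto

lemma sw_add: "bil f \<Longrightarrow> sw f (a + b) = sw f a + sw f b"
  using transfer[OF d_add] by simp
lemma sw_sc: "bil f \<Longrightarrow> sw f (sc c a) = sc c (sw f a)"
proof -
  assume f: "bil f"
  have "sw f (sc c a) = tsum (\<lambda>x y. f (sc c x) y) (delta a)"
    using transfer[OF d_sc f] tsum_map2[of f "sc c" "\<lambda>y. y"] by simp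
  also have "\<dots> = tsum (\<lambda>x y. sc c (f x y)) (delta a)"
    using f by (simp add: bil_def lin_def)
  finally show ?thesis by (simp add: tsum_sc_out)
qed
lemma lin_sw: "bil f \<Longrightarrow> lin g \<Longrightarrow> lin (\<lambda>x. sw f (g x))"
  by (intro linI) (auto simp: linD sw_add sw_sc)

lemmas lin_intros = lin_id lin_add lin_mulL lin_mulR lin_scL lin_tsum lin_sw lin_S lin_B1 lin_B2
  lin_eps bilI triI

lemma counitL: "lin g \<Longrightarrow> sw (\<lambda>x y. sc (eps x) (g y)) a = g a"
  using tsum_lin_out[of g "\<lambda>x y. sc (eps x) y" "delta a"] counit(1)[of a] by (simp add: linD)
lemma counitR: "lin g \<Longrightarrow> sw (\<lambda>x y. sc (eps y) (g x)) a = g a"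
  using tsum_lin_out[of g "\<lambda>x y. sc (eps y) x" "delta a"] counit(2)[of a] by (simp add: linD)

lemma coassoc: "tri f \<Longrightarrow>
  sw (\<lambda>x y. sw (\<lambda>x1 x2. f x1 x2 y) x) a = sw (\<lambda>x y. sw (\<lambda>y1 y2. f x y1 y2) y) a"
  using transfer3[OF d_coassoc] by (simp add: tsum3_concat case_prod_beta)
lemma cocomm: "bil f \<Longrightarrow> sw f a = sw (\<lambda>x y. f y x) a"
  using transfer[OF d_cocomm] by simp
lemma sw_mult: "bil f \<Longrightarrow> sw f (a * b) = sw (\<lambda>x y. sw (\<lambda>u v. f (x * u) (y * v)) b) a"
  using transfer[OF d_mult] by (simp add: tsum_concat)
lemma sw_one: "bil f \<Longrightarrow> sw f 1 = f 1 1"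
  using transfer[OF d_one] by simp
lemma sw_B1: "bil f \<Longrightarrow> sw f (B1 a) = sw (\<lambda>x y. f (B1 x) (B1 y)) a"
  using transfer[OF d_B1] by simp
lemma sw_B2: "bil f \<Longrightarrow> sw f (B2 a) = sw (\<lambda>x y. f (B2 x) (B2 y)) a"
  using transfer[OF d_B2] by simp


lemma test: assumes f: "bil f" shows "bil (\<lambda>x y. sw (\<lambda>u v. f (x * u) (y * v)) b)"
  by (intro lin_intros lin_bilL[OF f] lin_bilR[OF f])
lemma test2: "bil (\<lambda>x y. B1 x * b * S (B2 y))"
  by (intro lin_intros)

definition quad :: "('h \<Rightarrow> 'h \<Rightarrow> 'h \<Rightarrow> 'h \<Rightarrow> 'h) \<Rightarrow> bool" where
  "quad g \<longleftrightarrow> (\<forall>b c d. lin (\<lambda>a. g a b c d)) \<and> (\<forall>a c d. lin (\<lambda>b. g a b c d))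
    \<and> (\<forall>a b d. lin (\<lambda>c. g a b c d)) \<and> (\<forall>a b c. lin (\<lambda>d. g a b c d))"
lemma quadI: "(\<And>b c d. lin (\<lambda>a. g a b c d)) \<Longrightarrow> (\<And>a c d. lin (\<lambda>b. g a b c d)) \<Longrightarrow>
    (\<And>a b d. lin (\<lambda>c. g a b c d)) \<Longrightarrow> (\<And>a b c. lin (\<lambda>d. g a b c d)) \<Longrightarrow> quad g"
  by (auto simp: quad_def)
lemma lin_q1: "quad g \<Longrightarrow> lin h \<Longrightarrow> lin (\<lambda>x. g (h x) b c d)" unfolding quad_def lin_def by auto
lemma lin_q2: "quad g \<Longrightarrow> lin h \<Longrightarrow> lin (\<lambda>x. g a (h x) c d)" unfolding quad_def lin_def by auto
lemma lin_q3: "quad g \<Longrightarrow> lin h \<Longrightarrow> lin (\<lambda>x. g a b (h x) d)" unfolding quad_def lin_def by auto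
lemma lin_q4: "quad g \<Longrightarrow> lin h \<Longrightarrow> lin (\<lambda>x. g a b c (h x))" unfolding quad_def lin_def by auto

lemma midswap:
  assumes q: "quad g"
  shows "sw (\<lambda>x y. sw (\<lambda>x1 x2. sw (\<lambda>y1 y2. g x1 x2 y1 y2) y) x) z =
         sw (\<lambda>x y. sw (\<lambda>x1 x2. sw (\<lambda>y1 y2. g x1 y1 x2 y2) y) x) z"
proof -
  note L = lin_intros lin_q1[OF q] lin_q2[OF q] lin_q3[OF q] lin_q4[OF q]
  have e1: "sw (\<lambda>x y. sw (\<lambda>x1 x2. sw (\<lambda>y1 y2. g x1 x2 y1 y2) y) x) z =
     sw (\<lambda>x y. sw (\<lambda>y1 y2. sw (\<lambda>w1 w2. g x y1 w1 w2) y2) y) z"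
    by (rule coassoc[of "\<lambda>a b w. sw (\<lambda>w1 w2. g a b w1 w2) w"]) (intro L)
  have inner: "sw (\<lambda>y1 y2. sw (\<lambda>w1 w2. g x y1 w1 w2) y2) y =
       sw (\<lambda>p q. sw (\<lambda>q1 q2. g x q1 p q2) q) y" for x y
  proof -
    have "sw (\<lambda>y1 y2. sw (\<lambda>w1 w2. g x y1 w1 w2) y2) y = sw (\<lambda>p q. sw (\<lambda>p1 p2. g x p1 p2 q) p) y"
      by (rule coassoc[of "\<lambda>a b c. g x a b c", symmetric]) (intro L)
    also have "\<dots> = sw (\<lambda>p q. sw (\<lambda>p1 p2. g x p2 p1 q) p) y"
      by (intro tsum_cong cocomm) (intro L)
    also have "\<dots> = sw (\<lambda>p q. sw (\<lambda>q1 q2. g x q1 p q2) q) y"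
      by (rule coassoc[of "\<lambda>a b c. g x b a c"]) (intro L)
    finally show ?thesis .
  qed
  have e3: "sw (\<lambda>x y. sw (\<lambda>p q. sw (\<lambda>q1 q2. g x q1 p q2) q) y) z =
     sw (\<lambda>x y. sw (\<lambda>x1 x2. sw (\<lambda>y1 y2. g x1 y1 x2 y2) y) x) z"
    by (rule coassoc[of "\<lambda>a b c. sw (\<lambda>c1 c2. g a c1 b c2) c", symmetric]) (intro L)
  show ?thesis using e1 e3 by (simp only: inner)
qed

lemma S_one: "S 1 = 1"
proof -
  have "sw (\<lambda>x y. S x * y) 1 = S 1 * 1" by (rule sw_one) (intro lin_intros)
  then show ?thesis using antipode(1)[of 1] by (simp add: eps_one)
qed

lemma anti1: "sw (\<lambda>r s. A * r * S s * C) y = sc (eps y) (A * C)"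
proof -
  have "sw (\<lambda>r s. A * r * S s * C) y = sw (\<lambda>r s. (\<lambda>t. A * t * C) (r * S s)) y"
    by (simp add: mult.assoc)
  also have "\<dots> = A * sw (\<lambda>r s. r * S s) y * C"
    by (rule tsum_lin_out) (intro lin_intros)
  finally show ?thesis by (simp add: antipode sc_multL[symmetric] sc_multR[symmetric])
qed

lemma anti2: "sw (\<lambda>r s. A * r * S s) y = sc (eps y) A"
  using anti1[where A=A and y=y and C=1] by simp

lemma anti3: "sw (\<lambda>r s. A * S r * s * C) y = sc (eps y) (A * C)"
proof -
  have "sw (\<lambda>r s. A * S r * s * C) y = sw (\<lambda>r s. (\<lambda>t. A * t * C) (S r * s)) y"
    by (simp add: mult.assoc)
  also have "\<dots> = A * sw (\<lambda>r s. S r * s) y * C"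
    by (rule tsum_lin_out) (intro lin_intros)
  finally show ?thesis by (simp add: antipode sc_multL[symmetric] sc_multR[symmetric])
qed

lemma S_mult: "S (x * y) = S y * S x"
proof -
  define T where "T = sw (\<lambda>x1 x2. sw (\<lambda>p q. sw (\<lambda>y1 y2.
      sw (\<lambda>r s. S (x1 * y1) * p * r * S s * S q) y2) y) x2) x"
  have "T = sw (\<lambda>x1 x2. sw (\<lambda>p q. sw (\<lambda>y1 y2. sc (eps y2) (S (x1 * y1) * p * S q)) y) x2) x"
    unfolding T_def by (simp only: anti1)
  also have "\<dots> = sw (\<lambda>x1 x2. sw (\<lambda>y1 y2. sw (\<lambda>p q. sc (eps y2) (S (x1 * y1) * p * S q)) x2) y) x"
    by (simp only: tsum_comm[of _ "delta y"])
  also have "\<dots> = sw (\<lambda>x1 x2. sw (\<lambda>y1 y2. sc (eps y2) (sc (eps x2) (S (x1 * y1)))) y) x"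
    by (simp only: tsum_sc_out anti2)
  also have "\<dots> = sw (\<lambda>x1 x2. sw (\<lambda>y1 y2. sc (eps (x2 * y2)) (S (x1 * y1))) y) x"
    by (simp add: eps_mult mult.commute)
  also have "\<dots> = sw (\<lambda>u v. sc (eps v) (S u)) (x * y)"
    by (rule sw_mult[symmetric]) (intro lin_intros)
  also have "\<dots> = S (x * y)" by (rule counitR) (intro lin_intros)
  finally have T1: "T = S (x * y)" .
  have "T = sw (\<lambda>a c. sw (\<lambda>a1 a2. sw (\<lambda>y1 y2.
      sw (\<lambda>r s. S (a1 * y1) * a2 * r * S s * S c) y2) y) a) x"
    unfolding T_def
    by (rule coassoc[of "\<lambda>a b c. sw (\<lambda>y1 y2. sw (\<lambda>r s. S (a * y1) * b * r * S s * S c) y2) y", symmetric])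
      (intro lin_intros)
  also have "\<dots> = sw (\<lambda>a c. sw (\<lambda>a1 a2. sw (\<lambda>u s.
      sw (\<lambda>y1 r. S (a1 * y1) * a2 * r * S s * S c) u) y) a) x"
  proof -
    have "sw (\<lambda>y1 y2. sw (\<lambda>r s. S (a1 * y1) * a2 * r * S s * S c) y2) y =
       sw (\<lambda>u s. sw (\<lambda>y1 r. S (a1 * y1) * a2 * r * S s * S c) u) y" for a1 a2 c
      by (rule coassoc[of "\<lambda>y1 r s. S (a1 * y1) * a2 * r * S s * S c", symmetric]) (intro lin_intros)
    then show ?thesis by (simp only:)
  qed
  also have "\<dots> = sw (\<lambda>a c. sw (\<lambda>u s. sw (\<lambda>a1 a2.
      sw (\<lambda>y1 r. S (a1 * y1) * (a2 * r) * (S s * S c)) u) a) y) x"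
    by (simp only: tsum_comm[of _ "delta y"] mult.assoc)
  also have "\<dots> = sw (\<lambda>a c. sw (\<lambda>u s. sw (\<lambda>p q. S p * q * (S s * S c)) (a * u)) y) x"
  proof -
    have "sw (\<lambda>a1 a2. sw (\<lambda>y1 r. S (a1 * y1) * (a2 * r) * (S s * S c)) u) a =
      sw (\<lambda>p q. S p * q * (S s * S c)) (a * u)" for a u s c
      by (rule sw_mult[symmetric]) (intro lin_intros)
    then show ?thesis by (simp only:)
  qed
  also have "\<dots> = sw (\<lambda>a c. sw (\<lambda>u s. sc (eps a) (sc (eps u) (S s * S c))) y) x"
  proof -
    have "sw (\<lambda>p q. S p * q * (S s * S c)) (a * u) = sc (eps a) (sc (eps u) (S s * S c))" for a u s c
      using anti3[where A=1 and y="a * u" and C="S s * S c"] by (simp add: eps_mult mult.commute)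
    then show ?thesis by (simp only:)
  qed
  also have "\<dots> = sw (\<lambda>a c. sc (eps a) (S y * S c)) x"
  proof -
    have "sw (\<lambda>u s. sc (eps a) (sc (eps u) (S s * S c))) y = sc (eps a) (S y * S c)" for a c
    proof -
      have "sw (\<lambda>u s. sc (eps u) (S s * S c)) y = S y * S c"
        by (rule counitL) (intro lin_intros)
      moreover have "sw (\<lambda>u s. sc (eps a) (sc (eps u) (S s * S c))) y =
         sc (eps a) (sw (\<lambda>u s. sc (eps u) (S s * S c)) y)" by (rule tsum_sc_out)
      ultimately show ?thesis by simp
    qed
    then show ?thesis by (simp only:)
  qed
  also have "\<dots> = S y * S x" by (rule counitL) (intro lin_intros)
  finally show ?thesis using T1 by simp
qed

lemma antf2: assumes f: "bil f" shows "sw (\<lambda>r t. f U (v * r * S t)) z = sc (eps z) (f U v)"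
proof -
  have "sw (\<lambda>r t. f U (v * r * S t)) z = sw (\<lambda>r t. (\<lambda>w. f U (v * w)) (r * S t)) z"
    by (simp add: mult.assoc)
  also have "\<dots> = f U (v * sw (\<lambda>r t. r * S t) z)"
    by (rule tsum_lin_out) (intro lin_intros lin_bilR[OF f])
  also have "\<dots> = sc (eps z) (f U v)"
    using f by (simp add: antipode sc_multR[symmetric] bil_def lin_def)
  finally show ?thesis .
qed

lemma antf1: assumes f: "bil f" shows "sw (\<lambda>r t. f (u * r * S t) V) z = sc (eps z) (f u V)"
proof -
  have "sw (\<lambda>r t. f (u * r * S t) V) z = sw (\<lambda>r t. (\<lambda>w. f (u * w) V) (r * S t)) z"
    by (simp add: mult.assoc)
  also have "\<dots> = f (u * sw (\<lambda>r t. r * S t) z) V"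
    by (rule tsum_lin_out) (intro lin_intros lin_bilL[OF f])
  also have "\<dots> = sc (eps z) (f u V)"
    using f by (simp add: antipode sc_multR[symmetric] bil_def lin_def)
  finally show ?thesis .
qed

lemma C1: assumes f: "bil f"
  shows "sw (\<lambda>z1 z2. sw (\<lambda>p q. sw (\<lambda>r t. f (u * p * S r) (v * q * S t)) z2) z1) z = sc (eps z) (f u v)"
proof -
  note L = lin_intros lin_bilL[OF f] lin_bilR[OF f]
  have "sw (\<lambda>z1 z2. sw (\<lambda>p q. sw (\<lambda>r t. f (u * p * S r) (v * q * S t)) z2) z1) z =
    sw (\<lambda>z1 z2. sw (\<lambda>p r. sw (\<lambda>q t. f (u * p * S r) (v * q * S t)) z2) z1) z"
    by (rule midswap[of "\<lambda>p q r t. f (u * p * S r) (v * q * S t)"]) (intro quadI L)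
  also have "\<dots> = sw (\<lambda>z1 z2. sw (\<lambda>p r. sc (eps z2) (f (u * p * S r) v)) z1) z"
    by (simp only: antf2[OF f])
  also have "\<dots> = sw (\<lambda>z1 z2. sc (eps z2) (sc (eps z1) (f u v))) z"
    by (simp only: tsum_sc_out antf1[OF f])
  also have "\<dots> = sw (\<lambda>z1 z2. sc (eps z1) ((\<lambda>w. sc (eps w) (f u v)) z2)) z"
    by (simp add: mult.commute)
  also have "\<dots> = sc (eps z) (f u v)"
    by (rule counitL) (intro lin_intros)
  finally show ?thesis .
qed

lemma C2: assumes f: "bil f"
  shows "sw (\<lambda>a1 a2. sw (\<lambda>p q. sw (\<lambda>s t. f (p * s * X) (q * t * Y)) a2) (S a1)) a = sc (eps a) (f X Y)"
proof -
  note L = lin_intros lin_bilL[OF f] lin_bilR[OF f]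
  define g where "g m n = f (m * X) (n * Y)" for m n
  have g: "bil g" unfolding g_def by (intro L)
  have "sw (\<lambda>p q. sw (\<lambda>s t. f (p * s * X) (q * t * Y)) a2) (S a1) = sw g (S a1 * a2)" for a1 a2
    unfolding g_def by (rule sw_mult[symmetric]) (intro L)
  then have "sw (\<lambda>a1 a2. sw (\<lambda>p q. sw (\<lambda>s t. f (p * s * X) (q * t * Y)) a2) (S a1)) a =
      sw (\<lambda>a1 a2. sw g (S a1 * a2)) a" by (simp only:)
  also have "\<dots> = sw g (sw (\<lambda>a1 a2. S a1 * a2) a)"
    by (rule tsum_lin_out) (intro lin_intros g)
  also have "\<dots> = sc (eps a) (f X Y)"
    using g by (simp add: antipode sw_sc sw_one g_def)
  finally show ?thesis .
qed

lemma sw_S: assumes f: "bil f" shows "sw f (S a) = sw (\<lambda>x y. f (S x) (S y)) a"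
proof -
  note L = lin_intros lin_bilL[OF f] lin_bilR[OF f]
  define K where "K m n z = sw (\<lambda>z1 z2. sw (\<lambda>p q. sw (\<lambda>r t. f (m * p * S r) (n * q * S t)) z2) z1) z" for m n z
  have "sw f (S a) = sw f (sw (\<lambda>x y. sc (eps y) (S x)) a)"
    by (subst counitR) (intro lin_intros, rule refl)
  also have "\<dots> = sw (\<lambda>x y. sw f (sc (eps y) (S x))) a"
    by (rule tsum_lin_out[symmetric]) (intro L)
  also have "\<dots> = sw (\<lambda>a1 a2. sw (\<lambda>m n. sc (eps a2) (f m n)) (S a1)) a"
    by (simp only: sw_sc[OF f] tsum_sc_out)
  also have "\<dots> = sw (\<lambda>a1 a2. sw (\<lambda>m n. K m n a2) (S a1)) a"
    unfolding K_def by (simp only: C1[OF f])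
  also have "\<dots> = sw (\<lambda>a1 a2. sw (\<lambda>z1 z2. sw (\<lambda>m n. sw (\<lambda>p q. sw (\<lambda>r t.
       f (m * p * S r) (n * q * S t)) z2) z1) (S a1)) a2) a"
  proof -
    have "sw (\<lambda>m n. K m n a2) (S a1) = sw (\<lambda>z1 z2. sw (\<lambda>m n. sw (\<lambda>p q. sw (\<lambda>r t.
       f (m * p * S r) (n * q * S t)) z2) z1) (S a1)) a2" for a1 a2
      unfolding K_def by (rule tsum_comm)
    then show ?thesis by (simp only:)
  qed
  also have "\<dots> = sw (\<lambda>a1 a2. sw (\<lambda>w1 w2. sw (\<lambda>m n. sw (\<lambda>p q. sw (\<lambda>r t.
       f (m * p * S r) (n * q * S t)) a2) w2) (S w1)) a1) a"
    by (rule coassoc[of "\<lambda>w s t. sw (\<lambda>m n. sw (\<lambda>p q. sw (\<lambda>r t'.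
       f (m * p * S r) (n * q * S t')) t) s) (S w)", symmetric]) (intro L)
  also have "\<dots> = sw (\<lambda>a1 a2. sw (\<lambda>r t. sw (\<lambda>w1 w2. sw (\<lambda>m n. sw (\<lambda>p q.
       f (m * p * S r) (n * q * S t)) w2) (S w1)) a1) a2) a"
  proof -
    have "sw (\<lambda>w1 w2. sw (\<lambda>m n. sw (\<lambda>p q. sw (\<lambda>r t.
       f (m * p * S r) (n * q * S t)) a2) w2) (S w1)) a1 =
       sw (\<lambda>r t. sw (\<lambda>w1 w2. sw (\<lambda>m n. sw (\<lambda>p q.
       f (m * p * S r) (n * q * S t)) w2) (S w1)) a1) a2" for a1 a2
      by (simp only: tsum_comm[of _ "delta a2"])
    then show ?thesis by (simp only:)
  qed
  also have "\<dots> = sw (\<lambda>a1 a2. sw (\<lambda>r t. sc (eps a1) (f (S r) (S t))) a2) a"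
    by (simp only: C2[OF f])
  also have "\<dots> = sw (\<lambda>a1 a2. sc (eps a1) (sw (\<lambda>r t. f (S r) (S t)) a2)) a"
    by (simp only: tsum_sc_out)
  also have "\<dots> = sw (\<lambda>x y. f (S x) (S y)) a"
    by (rule counitL) (intro L)
  finally show ?thesis .
qed

abbreviation dop where "dop \<equiv> desc_op delta S B1 B2"

lemma dop_def': "dop a b = sw (\<lambda>x y. B1 x * b * S (B2 y)) a"
  by (simp add: desc_op_def)

lemma sw_dop: assumes f: "bil f"
  shows "sw f (dop a b) = sw (\<lambda>x y. sw (\<lambda>u v. f (dop x u) (dop y v)) b) a"
proof -
  note L = lin_intros lin_bilL[OF f] lin_bilR[OF f]
  have s1: "sw f (B1 x * b * S (B2 y)) = sw (\<lambda>x1 x2. sw (\<lambda>p q. sw (\<lambda>y1 y2.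
     f (B1 x1 * p * S (B2 y1)) (B1 x2 * q * S (B2 y2))) y) b) x" for x y
  proof -
    define F where "F p q = sw (\<lambda>u v. f (p * u) (q * v)) (S (B2 y))" for p q
    have F: "bil F" unfolding F_def by (intro L)
    have F2: "F p q = sw (\<lambda>y1 y2. f (p * S (B2 y1)) (q * S (B2 y2))) y" for p q
    proof -
      have "F p q = sw (\<lambda>u v. f (p * S u) (q * S v)) (B2 y)"
        unfolding F_def by (rule sw_S) (intro L)
      also have "\<dots> = sw (\<lambda>y1 y2. f (p * S (B2 y1)) (q * S (B2 y2))) y"
        by (rule sw_B2) (intro L)
      finally show ?thesis .
    qed
    have "sw f (B1 x * b * S (B2 y)) = sw F (B1 x * b)"
      unfolding F_def by (rule sw_mult) (rule f)
    also have "\<dots> = sw (\<lambda>p1 q1. sw (\<lambda>p2 q2. F (p1 * p2) (q1 * q2)) b) (B1 x)"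
      by (rule sw_mult) (rule F)
    also have "\<dots> = sw (\<lambda>x1 x2. sw (\<lambda>p2 q2. F (B1 x1 * p2) (B1 x2 * q2)) b) x"
      by (rule sw_B1) (intro lin_intros lin_bilL[OF F] lin_bilR[OF F])
    finally show ?thesis by (simp add: F2 mult.assoc)
  qed
  have "sw f (dop a b) = sw (\<lambda>x y. sw f (B1 x * b * S (B2 y))) a"
    unfolding dop_def' by (rule tsum_lin_out[symmetric]) (intro L)
  also have "\<dots> = sw (\<lambda>x y. sw (\<lambda>x1 x2. sw (\<lambda>p q. sw (\<lambda>y1 y2.
     f (B1 x1 * p * S (B2 y1)) (B1 x2 * q * S (B2 y2))) y) b) x) a"
    by (simp only: s1)
  also have "\<dots> = sw (\<lambda>x y. sw (\<lambda>x1 x2. sw (\<lambda>y1 y2. sw (\<lambda>p q.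
     f (B1 x1 * p * S (B2 y1)) (B1 x2 * q * S (B2 y2))) b) y) x) a"
    by (simp only: tsum_comm[of _ "delta b"])
  also have "\<dots> = sw (\<lambda>x y. sw (\<lambda>x1 x2. sw (\<lambda>y1 y2. sw (\<lambda>p q.
     f (B1 x1 * p * S (B2 x2)) (B1 y1 * q * S (B2 y2))) b) y) x) a"
    by (rule midswap[of "\<lambda>x1 x2 y1 y2. sw (\<lambda>p q.
     f (B1 x1 * p * S (B2 y1)) (B1 x2 * q * S (B2 y2))) b"]) (intro quadI L)
  also have "\<dots> = sw (\<lambda>x y. sw (\<lambda>u v. sw (\<lambda>x1 x2. sw (\<lambda>y1 y2.
     f (B1 x1 * u * S (B2 x2)) (B1 y1 * v * S (B2 y2))) y) x) b) a"
    by (simp only: tsum_comm[of _ "delta b"])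
  also have "\<dots> = sw (\<lambda>x y. sw (\<lambda>u v. f (dop x u) (dop y v)) b) a"
  proof -
    have "sw (\<lambda>x1 x2. sw (\<lambda>y1 y2. f (B1 x1 * u * S (B2 x2)) (B1 y1 * v * S (B2 y2))) y) x
       = f (dop x u) (dop y v)" for x y u v
    proof -
      have "sw (\<lambda>y1 y2. f (B1 x1 * u * S (B2 x2)) (B1 y1 * v * S (B2 y2))) y =
         f (B1 x1 * u * S (B2 x2)) (dop y v)" for x1 x2
        unfolding dop_def' by (rule tsum_lin_out) (intro L)
      then have "sw (\<lambda>x1 x2. sw (\<lambda>y1 y2. f (B1 x1 * u * S (B2 x2)) (B1 y1 * v * S (B2 y2))) y) x
         = sw (\<lambda>x1 x2. f (B1 x1 * u * S (B2 x2)) (dop y v)) x" by (simp only:)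
      also have "\<dots> = f (dop x u) (dop y v)"
        unfolding dop_def' by (rule tsum_lin_out) (intro L)
      finally show ?thesis .
    qed
    then show ?thesis by (simp only:)
  qed
  finally show ?thesis .
qed

lemma dop_assoc: "dop (dop a b) c = dop a (dop b c)"
proof -
  have "dop (dop a b) c = sw (\<lambda>x y. B1 x * c * S (B2 y)) (dop a b)" by (rule dop_def')
  also have "\<dots> = sw (\<lambda>x y. sw (\<lambda>u v. B1 (dop x u) * c * S (B2 (dop y v))) b) a"
    by (rule sw_dop) (intro lin_intros)
  also have "\<dots> = sw (\<lambda>x y. sw (\<lambda>u v. (\<lambda>t. B1 x * t * S (B2 y)) (B1 u * c * S (B2 v))) b) a"
    by (simp add: RB1[symmetric] RB2[symmetric] S_mult mult.assoc)
  also have "\<dots> = sw (\<lambda>x y. B1 x * dop b c * S (B2 y)) a"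
  proof -
    have "sw (\<lambda>u v. (\<lambda>t. B1 x * t * S (B2 y)) (B1 u * c * S (B2 v))) b = B1 x * dop b c * S (B2 y)" for x y
      unfolding dop_def' by (rule tsum_lin_out) (intro lin_intros)
    then show ?thesis by (simp only:)
  qed
  also have "\<dots> = dop a (dop b c)" by (rule dop_def'[symmetric])
  finally show ?thesis .
qed

lemma dop_one: "dop 1 b = b"
proof -
  have "dop 1 b = B1 1 * b * S (B2 1)" unfolding dop_def' by (rule sw_one) (intro lin_intros)
  then show ?thesis by (simp add: B1_one B2_one S_one)
qed

lemma cocycle_dop: "cocycle delta S B1 B2 a = dop a 1"
  by (simp add: cocycle_def desc_op_def)

lemma lin_dopL: "lin (\<lambda>a. dop a b)" unfolding dop_def' by (intro lin_intros)
lemma lin_dopR: "lin (\<lambda>b. dop a b)" unfolding dop_def' by (intro lin_intros)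

lemma teq_sigma: "teq sc (delta (dop a 1)) (map (\<lambda>(x, y). (dop x 1, dop y 1)) (delta a))"
proof (rule teqI)
  fix f assume f: "bil f"
  have "sw f (dop a 1) = sw (\<lambda>x y. sw (\<lambda>u v. f (dop x u) (dop y v)) 1) a" by (rule sw_dop[OF f])
  also have "\<dots> = sw (\<lambda>x y. f (dop x 1) (dop y 1)) a"
  proof -
    have "sw (\<lambda>u v. f (dop x u) (dop y v)) 1 = f (dop x 1) (dop y 1)" for x y
      by (rule sw_one) (intro bilI lin_bilL[OF f] lin_bilR[OF f] lin_dopR)
    then show ?thesis by (simp only:)
  qed
  finally show "tsum f (delta (dop a 1)) = tsum f (map (\<lambda>(x, y). (dop x 1, dop y 1)) (delta a))"
    by simp
qed

lemma main:
  defines "H1 \<equiv> range (cocycle delta S B1 B2)"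
  shows "(\<forall>a\<in>H1. \<forall>b\<in>H1. desc_op delta S B1 B2 a b \<in> H1)
    \<and> (\<forall>a\<in>H1. \<exists>L. set L \<subseteq> H1 \<times> H1 \<and> teq sc (delta a) L)
    \<and> unital_algebra_on sc H1 (desc_op delta S B1 B2) 1
    \<and> coalgebra_on sc H1 delta eps \<and> cocommutative_on sc H1 delta"
proof -
  have H1: "H1 = range (\<lambda>a. dop a 1)" unfolding H1_def cocycle_dop by simp
  have closed: "\<forall>a\<in>H1. \<forall>b\<in>H1. dop a b \<in> H1"
  proof (intro ballI)
    fix a b assume "a \<in> H1" "b \<in> H1"
    then obtain a' b' where ab: "a = dop a' 1" "b = dop b' 1" unfolding H1 by auto
    have "dop a b = dop (dop a' b') 1" unfolding ab by (simp add: dop_assoc dop_one)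
    then show "dop a b \<in> H1" unfolding H1 by auto
  qed
  have Ls: "\<forall>a\<in>H1. \<exists>L. set L \<subseteq> H1 \<times> H1 \<and> teq sc (delta a) L"
  proof
    fix a assume "a \<in> H1"
    then obtain a' where a: "a = dop a' 1" unfolding H1 by auto
    show "\<exists>L. set L \<subseteq> H1 \<times> H1 \<and> teq sc (delta a) L"
      by (rule exI[of _ "map (\<lambda>(x, y). (dop x 1, dop y 1)) (delta a')"])
        (auto simp: a teq_sigma H1)
  qed
  have lsig: "lin (\<lambda>a. dop a 1)" by (rule lin_dopL)
  have sub: "V.subspace H1"
    unfolding V.subspace_def H1
  proof (intro conjI ballI allI)
    show "0 \<in> range (\<lambda>a. dop a 1)" using lin0[OF lsig] by (metis rangeI)
  next
    fix x y assume "x \<in> range (\<lambda>a. dop a 1)" "y \<in> range (\<lambda>a. dop a 1)"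
    then show "x + y \<in> range (\<lambda>a. dop a 1)" using linD(1)[OF lsig] by (auto intro!: image_eqI[where x="_ + _"])
  next
    fix c x assume "x \<in> range (\<lambda>a. dop a 1)"
    then show "sc c x \<in> range (\<lambda>a. dop a 1)" using linD(2)[OF lsig] by (auto intro!: image_eqI[where x="sc c _"])
  qed
  have one: "1 \<in> H1" unfolding H1 using dop_one[of 1] by (metis rangeI)
  have unital: "unital_algebra_on sc H1 dop 1"
    unfolding unital_algebra_on_def
  proof (intro conjI ballI sub one)
    show "\<And>a b. a \<in> H1 \<Longrightarrow> b \<in> H1 \<Longrightarrow> dop a b \<in> H1" using closed by blast
    show "\<And>b. lin_on sc H1 (\<lambda>a. dop a b)" using lin_dopL by (simp add: lin_on_def lin_def)
    show "\<And>a. lin_on sc H1 (\<lambda>b. dop a b)" using lin_dopR by (simp add: lin_on_def lin_def)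
    show "\<And>a b c. dop (dop a b) c = dop a (dop b c)" by (rule dop_assoc)
    show "\<And>a. dop 1 a = a" by (rule dop_one)
    show "\<And>a. a \<in> H1 \<Longrightarrow> dop a 1 = a" unfolding H1 by (auto simp: dop_assoc dop_one)
  qed
  have coal: "coalgebra_on sc H1 delta eps"
    using coalg sub Ls unfolding coalgebra_on_def flin_on_def by blast
  have cocom: "cocommutative_on sc H1 delta"
    using hopf unfolding cocomm_hopf_algebra_def cocommutative_on_def by blast
  show ?thesis using closed Ls unital coal cocom by blast
qed

end

theorem mainTheorem9:
  fixes sc :: "'k::field_char_0 \<Rightarrow> 'h::ring_1 \<Rightarrow> 'h"
    and delta :: "'h \<Rightarrow> ('h \<times> 'h) list" and eps :: "'h \<Rightarrow> 'k"
    and S B1 B2 :: "'h \<Rightarrow> 'h"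
  assumes "rota_baxter_system sc delta eps S B1 B2"
  defines "H1 \<equiv> range (cocycle delta S B1 B2)"
  shows "(\<forall>a\<in>H1. \<forall>b\<in>H1. desc_op delta S B1 B2 a b \<in> H1)
    \<and> (\<forall>a\<in>H1. \<exists>L. set L \<subseteq> H1 \<times> H1 \<and> teq sc (delta a) L)
    \<and> unital_algebra_on sc H1 (desc_op delta S B1 B2) 1
    \<and> coalgebra_on sc H1 delta eps \<and> cocommutative_on sc H1 delta"
proof -
  interpret R: RBS sc delta eps S B1 B2 by (rule RBS.intro) (rule assms(1))
  show ?thesis unfolding H1_def by (rule R.main)
qed

end
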